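(* Let $(q_n)_{n \ge 1}$ be a sequence of positive rational numbers, and let $(p_n)_{n \ge 1}$ be a sequence of prime numbers such that, for every $n \in \mathbb{N}$, $p_n \mid \mathsf{d}(q_n)$ and $p_n \nmid \mathsf{d}(q_k)$ for every $k \neq n$. Then the Puiseux monoid $M = \langle q_n \mid n \in \mathbb{N} \rangle$ is a length-finite-factorization monoid (LFFM).
   Context: For a positive rational $r$ in lowest terms $n/d$, $\mathsf{d}(r) := d$. A Puiseux monoid is an additive submonoid of $(\mathbb{Q}_{\ge 0},+)$. An atom of $M$ is a nonzero element $a$ such that $a=x+y$ with $x,y\in M$ forces $x=0$ or $y=0$; $M$ is atomic if each element is a finite sum of atoms. For nonzero $x \in M$, a factorization of $x$ is a formal (unordered) sum $a_1+\dots+a_\ell$ of atoms whose value is $x$, of length $\ell$; $\mathsf{Z}(x,\ell)$ denotes the set of factorizations of $x$ of length $\ell$. $M$ is an LFFM if $M$ is atomic and $\mathsf{Z}(x,\ell)$ is finite for every nonzero $x \in M$ and every $\ell \in \mathbb{N}$. *)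

theory Defs
  imports Complex_Main "HOL-Library.Multiset" "HOL-Computational_Algebra.Primes"
begin

definition den :: "rat \<Rightarrow> nat" where
  "den r = nat (snd (quotient_of r))"

definition puiseux_monoid :: "rat set \<Rightarrow> bool" where
  "puiseux_monoid M \<longleftrightarrow> M \<subseteq> {x. x \<ge> 0} \<and> 0 \<in> M \<and> (\<forall>x\<in>M. \<forall>y\<in>M. x + y \<in> M)"

inductive_set gen_monoid :: "rat set \<Rightarrow> rat set" for Q :: "rat set" where
  zero: "0 \<in> gen_monoid Q"
| gen: "q \<in> Q \<Longrightarrow> q \<in> gen_monoid Q"
| add: "x \<in> gen_monoid Q \<Longrightarrow> y \<in> gen_monoid Q \<Longrightarrow> x + y \<in> gen_monoid Q"

definition atoms :: "rat set \<Rightarrow> rat set" where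
  "atoms M = {a \<in> M. a \<noteq> 0 \<and> (\<forall>x\<in>M. \<forall>y\<in>M. a = x + y \<longrightarrow> x = 0 \<or> y = 0)}"

text \<open>Factorizations: formal unordered sums of atoms, i.e. multisets of atoms.\<close>
definition factorizations_len :: "rat set \<Rightarrow> rat \<Rightarrow> nat \<Rightarrow> rat multiset set" where
  "factorizations_len M x l =
     {f. set_mset f \<subseteq> atoms M \<and> sum_mset f = x \<and> size f = l}"

definition atomic :: "rat set \<Rightarrow> bool" where
  "atomic M \<longleftrightarrow> (\<forall>x\<in>M. x \<noteq> 0 \<longrightarrow>
      (\<exists>f. set_mset f \<subseteq> atoms M \<and> sum_mset f = x))"

definition LFFM :: "rat set \<Rightarrow> bool" where
  "LFFM M \<longleftrightarrow> atomic M \<and>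
     (\<forall>x\<in>M. x \<noteq> 0 \<longrightarrow> (\<forall>l. finite (factorizations_len M x l)))"

end

theory Submission
  imports Defs
begin

definition pint :: "nat \<Rightarrow> rat \<Rightarrow> bool" where
  "pint p r \<longleftrightarrow> (\<exists>u v. v \<noteq> 0 \<and> \<not> int p dvd v \<and> r = of_int u / of_int v)"

lemma den_pos: "den r > 0"
proof -
  obtain a b where ab: "quotient_of r = (a, b)" by (cases "quotient_of r")
  then show ?thesis using quotient_of_denom_pos[OF ab] by (simp add: den_def)
qed

lemma pint_iff: "pint p r \<longleftrightarrow> \<not> p dvd den r"
proof -
  obtain a b where ab: "quotient_of r = (a, b)" by (cases "quotient_of r")
  have bpos: "b > 0" using quotient_of_denom_pos[OF ab] .
  have r: "r = of_int a / of_int b" using quotient_of_div[OF ab] .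
  have cop: "coprime a b" using quotient_of_coprime[OF ab] .
  have dn: "p dvd den r \<longleftrightarrow> int p dvd b"
  proof -
    have "int (den r) = b" using bpos ab by (simp add: den_def)
    then show ?thesis by (metis int_dvd_int_iff)
  qed
  show ?thesis
  proof
    assume "pint p r"
    then obtain u v where uv: "v \<noteq> 0" "\<not> int p dvd v" "r = of_int u / of_int v"
      unfolding pint_def by blast
    have "of_int a / of_int b = (of_int u / of_int v :: rat)" using r uv by simp
    then have "rat_of_int a * of_int v = of_int u * of_int b" using uv(1) bpos
      by (simp add: frac_eq_eq)
    then have "a * v = u * b" by (simp flip: of_int_mult)
    then have "b dvd a * v" by (metis dvd_triv_right)
    then have "b dvd v" using cop
      by (metis coprime_commute coprime_dvd_mult_right_iff)
    then show "\<not> p dvd den r" using dn uv(2) dvd_trans by blast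
  next
    assume "\<not> p dvd den r"
    then show "pint p r" unfolding pint_def using dn r bpos by (intro exI[of _ a] exI[of _ b]) auto
  qed
qed

lemma pint_int: "prime p \<Longrightarrow> pint p (of_int u)"
  unfolding pint_def
  by (rule exI[of _ u], rule exI[of _ 1]) (auto simp: )

lemma pint_add:
  assumes "prime p" "pint p x" "pint p y" shows "pint p (x + y)"
proof -
  obtain u v where uv: "v \<noteq> 0" "\<not> int p dvd v" "x = of_int u / of_int v"
    using assms(2) unfolding pint_def by blast
  obtain u' v' where uv': "v' \<noteq> 0" "\<not> int p dvd v'" "y = of_int u' / of_int v'"
    using assms(3) unfolding pint_def by blast
  have pr: "prime (int p)" using assms(1) by simp
  have "\<not> int p dvd v * v'" using uv uv' pr by (simp add: prime_dvd_mult_iff)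
  moreover have "x + y = of_int (u * v' + u' * v) / of_int (v * v')"
    using uv uv' by (simp add: field_simps)
  ultimately show ?thesis unfolding pint_def using uv uv'
    by (intro exI[of _ "u * v' + u' * v"] exI[of _ "v * v'"]) auto
qed

lemma pint_uminus: "pint p x \<Longrightarrow> pint p (- x)"
  unfolding pint_def by (metis minus_divide_left of_int_minus)

lemma pint_mult_rev:
  assumes "prime p" "pint p (of_nat c * a)" "\<not> p dvd c" shows "pint p a"
proof -
  obtain u v where uv: "v \<noteq> 0" "\<not> int p dvd v" "of_nat c * a = of_int u / of_int v"
    using assms(2) unfolding pint_def by blast
  have c0: "c \<noteq> 0" using assms(3) by (metis dvd_0_right)
  have pr: "prime (int p)" using assms(1) by simp
  have "\<not> int p dvd int c * v" using uv assms(3) pr by (simp add: prime_dvd_mult_iff)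
  moreover have "a = of_int u / of_int (int c * v)" using uv c0
    by (simp add: field_simps)
  ultimately show ?thesis unfolding pint_def using uv c0
    by (intro exI[of _ u] exI[of _ "int c * v"]) auto
qed

lemma pint_sum_mset:
  assumes "prime p" "\<And>x. x \<in># f \<Longrightarrow> pint p x" shows "pint p (sum_mset f)"
  using assms(2)
proof (induction f)
  case empty then show ?case using pint_int[of p 0] assms(1) by simp
next
  case (add x f) then show ?case using pint_add[OF assms(1)] by simp
qed

lemma sum_mset_split: "sum_mset f = of_nat (count f a) * (a::rat) + sum_mset {#x \<in># f. x \<noteq> a#}"
proof -
  have "sum_mset f = sum_mset {#x \<in># f. x = a#} + sum_mset {#x \<in># f. x \<noteq> a#}"
    by (metis multiset_partition sum_mset.union)
  then show ?thesis by (simp add: filter_eq_replicate_mset)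
qed

lemma gen_monoid_mset:
  "x \<in> gen_monoid Q \<longleftrightarrow> (\<exists>f. set_mset f \<subseteq> Q \<and> sum_mset f = x)"
proof
  assume "x \<in> gen_monoid Q"
  then show "\<exists>f. set_mset f \<subseteq> Q \<and> sum_mset f = x"
  proof induction
    case zero then show ?case by (intro exI[of _ "{#}"]) auto
  next
    case (gen q) then show ?case by (intro exI[of _ "{#q#}"]) auto
  next
    case (add x y)
    then obtain f g where "set_mset f \<subseteq> Q" "sum_mset f = x" "set_mset g \<subseteq> Q" "sum_mset g = y"
      by blast
    then show ?case by (intro exI[of _ "f + g"]) auto
  qed
next
  assume "\<exists>f. set_mset f \<subseteq> Q \<and> sum_mset f = x"
  then obtain f where f: "set_mset f \<subseteq> Q" "sum_mset f = x" by blast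
  have "set_mset f \<subseteq> Q \<Longrightarrow> sum_mset f \<in> gen_monoid Q"
  proof (induction f)
    case empty then show ?case by (simp add: gen_monoid.zero)
  next
    case (add a f) then show ?case by (simp add: gen_monoid.gen gen_monoid.add)
  qed
  then show "x \<in> gen_monoid Q" using f by simp
qed

lemma sum_mset_nonneg': "(\<And>x. x \<in># f \<Longrightarrow> x > (0::rat)) \<Longrightarrow> sum_mset f \<ge> 0"
proof (induction f)
  case (add x f)
  have "sum_mset f \<ge> 0" using add.IH add.prems by simp
  moreover have "x > 0" using add.prems by simp
  ultimately show ?case by simp
qed simp

lemma sum_mset_pos:
  assumes "\<And>x. x \<in># f \<Longrightarrow> x > (0::rat)" "f \<noteq> {#}" shows "sum_mset f > 0"
  using assms
proof (induction f)
  case empty then show ?case by simp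
next
  case (add x f)
  have "sum_mset f \<ge> 0"
    using add.prems(1) by (intro sum_mset_nonneg') auto
  then show ?case using add.prems(1)[of x] by simp
qed


theorem proposition4p10:
  fixes q :: "nat \<Rightarrow> rat" and p :: "nat \<Rightarrow> nat"
  assumes q_pos: "\<And>n. q n > 0"
    and p_prime: "\<And>n. prime (p n)"
    and p_dvd: "\<And>n. p n dvd den (q n)"
    and p_ndvd: "\<And>n k. k \<noteq> n \<Longrightarrow> \<not> p n dvd den (q k)"
  shows "puiseux_monoid (gen_monoid (range q)) \<and> LFFM (gen_monoid (range q))"
proof -
  define M where "M = gen_monoid (range q)"
  have qinj: "q n = q k \<Longrightarrow> n = k" for n k using p_dvd[of n] p_ndvd[of k n] by metis
  have pinj: "inj p"
  proof (rule injI)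
    fix n k assume "p n = p k" then show "n = k" using p_dvd[of k] p_ndvd[of k n] by metis
  qed
  have npint: "\<not> pint (p n) (q n)" for n using p_dvd pint_iff by blast
  have opint: "k \<noteq> n \<Longrightarrow> pint (p n) (q k)" for n k using p_ndvd pint_iff by blast
  have posf: "x > 0" if "set_mset f \<subseteq> range q" "x \<in># f" for f x
    using that q_pos by auto
  have key: "\<not> pint (p n) (sum_mset f)"
    if f: "set_mset f \<subseteq> range q" and c: "\<not> p n dvd count f (q n)" for f n
  proof
    assume a: "pint (p n) (sum_mset f)"
    have "pint (p n) (sum_mset {#x \<in># f. x \<noteq> q n#})"
    proof (rule pint_sum_mset[OF p_prime])
      fix z assume z: "z \<in># {#x \<in># f. x \<noteq> q n#}"
      then obtain k where "z = q k" "k \<noteq> n" using f by auto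
      then show "pint (p n) z" using opint by simp
    qed
    then have "pint (p n) (sum_mset f + - sum_mset {#x \<in># f. x \<noteq> q n#})"
      using a pint_add[OF p_prime] pint_uminus by blast
    then have "pint (p n) (of_nat (count f (q n)) * q n)"
      using sum_mset_split[of f "q n"] by simp
    then have "pint (p n) (q n)" using pint_mult_rev[OF p_prime _ c] by blast
    then show False using npint by blast
  qed
  have pm: "puiseux_monoid M"
    unfolding puiseux_monoid_def M_def
  proof (intro conjI ballI subsetI)
    fix x assume "x \<in> gen_monoid (range q)"
    then obtain f where "set_mset f \<subseteq> range q" "sum_mset f = x" using gen_monoid_mset by blast
    then show "x \<in> {x. x \<ge> 0}" using sum_mset_nonneg'[of f] posf by auto
  qed (auto intro: gen_monoid.intros)
  have Mpos: "x \<in> M \<Longrightarrow> x \<ge> 0" for x using pm unfolding puiseux_monoid_def by auto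
  have atoms_eq: "atoms M = range q"
  proof
    show "atoms M \<subseteq> range q"
    proof
      fix a assume a: "a \<in> atoms M"
      then have aM: "a \<in> M" and a0: "a \<noteq> 0"
        and irr: "\<And>x y. x \<in> M \<Longrightarrow> y \<in> M \<Longrightarrow> a = x + y \<Longrightarrow> x = 0 \<or> y = 0"
        unfolding atoms_def by auto
      obtain f where f: "set_mset f \<subseteq> range q" "sum_mset f = a"
        using aM gen_monoid_mset M_def by blast
      have "f \<noteq> {#}" using f a0 by auto
      then obtain b f' where fb: "f = add_mset b f'" by (metis multiset_cases)
      have bq: "b \<in> range q" using f fb by auto
      have "f' = {#}"
      proof (rule ccontr)
        assume ne: "f' \<noteq> {#}"
        have "sum_mset f' > 0" using ne f fb posf by (intro sum_mset_pos) auto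
        moreover have "b > 0" using bq q_pos by auto
        moreover have "b \<in> M" using bq M_def by (auto intro: gen_monoid.gen)
        moreover have "sum_mset f' \<in> M" using f fb M_def gen_monoid_mset by auto
        ultimately show False using irr[of b "sum_mset f'"] f fb by auto
      qed
      then show "a \<in> range q" using f fb bq by simp
    qed
  next
    show "range q \<subseteq> atoms M"
    proof
      fix a assume "a \<in> range q"
      then obtain n where an: "a = q n" by blast
      have "a \<in> M" using an M_def by (auto intro: gen_monoid.gen)
      moreover have "a \<noteq> 0" using an q_pos[of n] by simp
      moreover have "x = 0 \<or> y = 0" if xy: "x \<in> M" "y \<in> M" "a = x + y" for x y
      proof (rule ccontr)
        assume nz: "\<not> (x = 0 \<or> y = 0)"
        obtain f where f: "set_mset f \<subseteq> range q" "sum_mset f = x"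
          using xy M_def gen_monoid_mset by blast
        obtain g where g: "set_mset g \<subseteq> range q" "sum_mset g = y"
          using xy M_def gen_monoid_mset by blast
        define h where "h = f + g"
        have h: "set_mset h \<subseteq> range q" "sum_mset h = q n" using f g xy an h_def by auto
        have fne: "f \<noteq> {#}" "g \<noteq> {#}" using f g nz by auto
        show False
        proof (cases "q n \<in># h")
          case False
          have "pint (p n) (sum_mset h)"
          proof (rule pint_sum_mset[OF p_prime])
            fix z assume "z \<in># h"
            then obtain k where "z = q k" "k \<noteq> n" using h False by (metis imageE subsetD)
            then show "pint (p n) z" using opint by simp
          qed
          then show False using h npint by simp
        next
          case True
          then obtain h' where hh: "h = add_mset (q n) h'" by (metis multi_member_split)
          have "sum_mset h' = 0" using h hh by simp
          moreover have "h' \<noteq> {#}"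
          proof
            assume "h' = {#}"
            then have "size h = 1" using hh by simp
            moreover have "size f \<noteq> 0" "size g \<noteq> 0" using fne by auto
            moreover have "size h = size f + size g" using h_def by simp
            ultimately show False by linarith
          qed
          moreover have "sum_mset h' > 0" using calculation(2) h hh posf by (intro sum_mset_pos) auto
          ultimately show False by simp
        qed
      qed
      ultimately show "a \<in> atoms M" unfolding atoms_def by blast
    qed
  qed
  have atomic: "atomic M"
    unfolding atomic_def atoms_eq using M_def gen_monoid_mset by blast
  have fin: "finite (factorizations_len M x l)" if x: "x \<in> M" "x \<noteq> 0" for x l
  proof -
    define S where "S = {n. p n \<le> l} \<union> {n. p n dvd den x}"
    have "finite S"
    proof -
      have "finite ({..l} \<union> {d. d dvd den x})" using den_pos[of x] by auto
      then have "finite (p -` ({..l} \<union> {d. d dvd den x}))"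
        using pinj by (intro finite_vimageI) auto
      moreover have "S = p -` ({..l} \<union> {d. d dvd den x})" unfolding S_def by auto
      ultimately show ?thesis by simp
    qed
    have "factorizations_len M x l \<subseteq> multisets_of_size (q ` S) l"
    proof
      fix f assume "f \<in> factorizations_len M x l"
      then have f: "set_mset f \<subseteq> range q" "sum_mset f = x" "size f = l"
        unfolding factorizations_len_def atoms_eq by auto
      have "set_mset f \<subseteq> q ` S"
      proof
        fix z assume z: "z \<in># f"
        then obtain n where zn: "z = q n" using f by auto
        have c1: "count f (q n) \<ge> 1" using z zn by simp
        have cl: "count f (q n) \<le> l" using f(3) by (metis count_le_size)
        have "n \<in> S"
        proof (cases "p n \<le> l")
          case True then show ?thesis unfolding S_def by simp
        next
          case False
          have "\<not> p n dvd count f (q n)"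
          proof
            assume "p n dvd count f (q n)"
            then have "p n \<le> count f (q n)" by (rule dvd_imp_le) (use c1 in simp)
            then show False using False cl by simp
          qed
          then have "\<not> pint (p n) x" using key f by blast
          then show ?thesis unfolding S_def using pint_iff by blast
        qed
        then show "z \<in> q ` S" using zn by simp
      qed
      then show "f \<in> multisets_of_size (q ` S) l" unfolding multisets_of_size_def using f by simp
    qed
    moreover have "finite (multisets_of_size (q ` S) l)" using \<open>finite S\<close> by auto
    ultimately show ?thesis by (rule finite_subset)
  qed
  show ?thesis unfolding M_def[symmetric] LFFM_def using pm atomic fin by blast
qed

end
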